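(* Let $S>0$, $\lambda>0$, $N>0$ and $\mathcal K\in\mathbb{N}^*$. For every $(N,\mathcal K)$-execution strategy $(n_1,\dots,n_{\mathcal K})$, $$S+\lambda SN\le S_{N,\mathcal K}(n_1,\dots,n_{\mathcal K})\le Se^{\lambda N}$$ and $$S+\tfrac12\lambda S\Big(N-\max_{1\le k\le\mathcal K}n_k\Big)\le\overline S_{N,\mathcal K}(n_1,\dots,n_{\mathcal K})\le S\,\frac{e^{\lambda N}-1}{\lambda N}.$$ Moreover, for fixed $N$ and $\mathcal K$, the maximum of $S_{N,\mathcal K}$ (equivalently of the market impact $I_{N,\mathcal K}=S_{N,\mathcal K}-S$) and the maximum of $\overline S_{N,\mathcal K}$ over all $(N,\mathcal K)$-execution strategies are attained if and only if the strategy is equally sized, $n_1=\dots=n_{\mathcal K}=N/\mathcal K$.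
   Context: Fix $S>0$ and $\lambda>0$. For $N>0$ and $\mathcal K\in\mathbb{N}^*$, an $(N,\mathcal K)$-execution strategy is a tuple $(n_1,\dots,n_{\mathcal K})\in(0,\infty)^{\mathcal K}$ with $\sum_{k=1}^{\mathcal K}n_k=N$. For $k\in\{0,\dots,\mathcal K\}$ its $k$-th price is $S_{N,k}(n_1,\dots,n_{\mathcal K}):=S\Big(1+\sum_{i=1}^{k}\lambda^i\sum_{1\le j_1<\dots<j_i\le k}n_{j_1}\cdots n_{j_i}\Big)=S\prod_{j=1}^k(1+\lambda n_j)$, and its average execution price is $\overline S_{N,\mathcal K}(n_1,\dots,n_{\mathcal K}):=\frac1N\sum_{k=1}^{\mathcal K}n_kS_{N,k-1}(n_1,\dots,n_{\mathcal K})$. *)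

theory Defs
  imports Complex_Main
begin

text \<open>An (N,K)-execution strategy: n_1,...,n_K > 0 with sum N (indices 1..K of n :: nat => real;
  values outside {1..K} are irrelevant).\<close>
definition exec_strategy :: "real \<Rightarrow> nat \<Rightarrow> (nat \<Rightarrow> real) \<Rightarrow> bool" where
  "exec_strategy N K n \<longleftrightarrow> (\<forall>k\<in>{1..K}. 0 < n k) \<and> (\<Sum>k=1..K. n k) = N"

text \<open>k-th price S_{N,k} = S (1 + sum_i lambda^i e_i(n_1..n_k)) = S prod_{j=1..k} (1 + lambda n_j).\<close>
definition kth_price :: "real \<Rightarrow> real \<Rightarrow> (nat \<Rightarrow> real) \<Rightarrow> nat \<Rightarrow> real" where
  "kth_price S lam n k = S * (\<Prod>j=1..k. (1 + lam * n j))"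

definition avg_price :: "real \<Rightarrow> real \<Rightarrow> real \<Rightarrow> nat \<Rightarrow> (nat \<Rightarrow> real) \<Rightarrow> real" where
  "avg_price S lam N K n = (1 / N) * (\<Sum>k=1..K. n k * kth_price S lam n (k - 1))"

end

theory Submission imports Defs "HOL-Analysis.Analysis" begin

lemma prod_ge_sum: fixes K :: nat shows "(\<forall>j\<in>{1..K}. 0 \<le> x j) \<Longrightarrow> 1 + (\<Sum>j=1..K. x j) \<le> (\<Prod>j=1..K. (1 + x j::real))"
proof (induction K)
  case 0 then show ?case by simp
next
  case (Suc K)
  then have IH: "1 + (\<Sum>j=1..K. x j) \<le> (\<Prod>j=1..K. (1 + x j))" by auto
  have x: "0 \<le> x (Suc K)" using Suc.prems by auto
  have s: "0 \<le> (\<Sum>j=1..K. x j)" using Suc.prems by (auto intro: sum_nonneg)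
  have "1 + (\<Sum>j=1..Suc K. x j) = (1 + (\<Sum>j=1..K. x j)) + x (Suc K)" by simp
  also have "\<dots> \<le> (1 + (\<Sum>j=1..K. x j)) * (1 + x (Suc K))" using x s
    by (simp add: algebra_simps mult_nonneg_nonneg)
  also have "\<dots> \<le> (\<Prod>j=1..K. (1 + x j)) * (1 + x (Suc K))"
    using IH x by (intro mult_right_mono) auto
  finally show ?case by simp
qed

lemma telescope: fixes K :: nat shows "lam * (\<Sum>k=1..K. n k * (\<Prod>j=1..k-1. (1 + lam * n j))) = (\<Prod>j=1..K. (1 + lam * n j)) - (1::real)"
proof (induction K)
  case 0 then show ?case by simp
next
  case (Suc K)
  have "lam * (\<Sum>k=1..Suc K. n k * (\<Prod>j=1..k-1. (1 + lam * n j)))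
     = lam * (\<Sum>k=1..K. n k * (\<Prod>j=1..k-1. (1 + lam * n j))) + lam * n (Suc K) * (\<Prod>j=1..K. (1 + lam * n j))"
    by (simp add: algebra_simps)
  also have "\<dots> = (\<Prod>j=1..Suc K. (1 + lam * n j)) - 1" using Suc by (simp add: algebra_simps)
  finally show ?case .
qed

lemma pairsum: fixes K :: nat shows "2 * (\<Sum>k=1..K. n k * (\<Sum>j=1..k-1. n j)) = (\<Sum>k=1..K. n k)^2 - (\<Sum>k=1..K. (n k)^2::real)"
proof (induction K)
  case 0 then show ?case by simp
next
  case (Suc K)
  show ?case using Suc by (simp add: algebra_simps power2_eq_square)
qed

lemma split2:
  assumes "finite A" "a \<in> A" "b \<in> A" "a \<noteq> b"
  shows "prod f A = f a * f b * prod f (A - {a,b})" "sum g A = g a + g b + sum g (A - {a,b})"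
proof -
  have e: "A - {a} - {b} = A - {a,b}" by auto
  have b: "b \<in> A - {a}" using assms by auto
  show "prod f A = f a * f b * prod f (A - {a,b})"
    using prod.remove[OF assms(1) assms(2), of f] prod.remove[of "A - {a}" b f] assms b e by (simp add: mult.assoc)
  show "sum g A = g a + g b + sum g (A - {a,b})"
    using sum.remove[OF assms(1) assms(2), of g] sum.remove[of "A - {a}" b g] assms b e by (simp add: add.assoc)
qed

lemma amgm:
  assumes lam: "lam > 0" and K: "K \<ge> 1" and st: "exec_strategy N K m"
  shows "(\<Prod>j=1..K. (1 + lam * m j)) \<le> (1 + lam * N / K)^K"
proof -
  have pos: "\<And>j. j \<in> {1..K} \<Longrightarrow> 0 \<le> 1 + lam * m j" using st lam unfolding exec_strategy_def
    by (smt (verit) mult_pos_pos)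
  have sm: "(\<Sum>j=1..K. m j) = N" using st unfolding exec_strategy_def by auto
  have c: "card {1..K} = K" by simp
  have "(\<Sum>i\<in>{1..K}. (1 + lam * m i) / card {1..K}) = (\<Sum>i\<in>{1..K}. (1 + lam * m i)) / K"
    by (simp add: sum_divide_distrib)
  also have "\<dots> = (K + lam * N) / K" using sm by (simp add: sum.distrib sum_distrib_left[symmetric])
  also have "\<dots> = 1 + lam * N / K" using K by (simp add: field_simps)
  finally have eq: "(\<Sum>i\<in>{1..K}. (1 + lam * m i) / card {1..K}) = 1 + lam * N / K" .
  have ge: "(\<Prod>i\<in>{1..K}. (1 + lam * m i)) powr (1 / card {1..K}) \<le> 1 + lam * N / K"
    using arith_geom_mean[of "{1..K}" "\<lambda>i. 1 + lam * m i"] K pos eq by auto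
  have pos': "\<And>j. j \<in> {1..K} \<Longrightarrow> 0 < 1 + lam * m j" using st lam unfolding exec_strategy_def
    by (smt (verit) mult_pos_pos)
  define P where "P = (\<Prod>i\<in>{1..K}. (1 + lam * m i))"
  have P0: "0 < P" unfolding P_def by (intro prod_pos) (use pos' in auto)
  have "(P powr (1 / K)) ^ K = (P powr (1 / K)) powr (real K)" using P0 by (simp add: powr_realpow)
  also have "\<dots> = P powr ((1 / K) * K)" by (simp add: powr_powr)
  also have "\<dots> = P" using K P0 by simp
  finally have "(\<Prod>i\<in>{1..K}. (1 + lam * m i)) = ((\<Prod>i\<in>{1..K}. (1 + lam * m i)) powr (1 / K)) ^ K"
    unfolding P_def by simp
  also have "\<dots> \<le> (1 + lam * N / K)^K" using ge c by (intro power_mono) auto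
  finally show ?thesis .
qed

lemma sq_id: "(1 + lam * ((x + y)/2)) * (1 + lam * ((x+y)/2)) - (1 + lam * y) * (1 + lam * x) = (lam * (y - x))^2 / (4::real)"
  by (simp add: power2_eq_square algebra_simps divide_simps)

lemma smooth:
  assumes lam: "lam > 0" and K: "K \<ge> 1" and st: "exec_strategy N K n"
    and i: "i \<in> {1..K}" and ne: "n i \<noteq> n 1"
  shows "\<exists>m. exec_strategy N K m \<and> (\<Prod>j=1..K. (1 + lam * n j)) < (\<Prod>j=1..K. (1 + lam * m j))"
proof -
  define a where "a = (n i + n 1) / 2"
  define m where "m = n(1 := a, i := a)"
  have i1: "1 \<noteq> i" using ne by auto
  have one: "1 \<in> {1..K}" using K by auto
  have np: "\<And>k. k \<in> {1..K} \<Longrightarrow> 0 < n k" using st unfolding exec_strategy_def by auto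
  have m1: "m 1 = a" and mi: "m i = a" using i1 by (auto simp: m_def)
  have mr: "\<And>k. k \<in> {1..K} - {1,i} \<Longrightarrow> m k = n k" by (auto simp: m_def)
  have rs: "(\<Sum>k\<in>{1..K} - {1,i}. m k) = (\<Sum>k\<in>{1..K} - {1,i}. n k)" by (rule sum.cong) (simp_all add: mr)
  have rp: "(\<Prod>k\<in>{1..K} - {1,i}. (1 + lam * m k)) = (\<Prod>k\<in>{1..K} - {1,i}. (1 + lam * n k))" by (rule prod.cong) (simp_all add: mr)
  have "(\<Sum>k=1..K. m k) = m 1 + m i + (\<Sum>k\<in>{1..K} - {1,i}. m k)" using split2(2)[OF finite_atLeastAtMost one i i1] by simp
  also have "\<dots> = n 1 + n i + (\<Sum>k\<in>{1..K} - {1,i}. n k)" unfolding rs m1 mi a_def by simp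
  also have "\<dots> = (\<Sum>k=1..K. n k)" by (rule split2(2)[OF finite_atLeastAtMost one i i1, symmetric])
  finally have ms: "(\<Sum>k=1..K. m k) = N" using st unfolding exec_strategy_def by simp
  have mp: "\<forall>k\<in>{1..K}. 0 < m k" using np[OF one] np[OF i] np by (auto simp: m_def a_def)
  have stm: "exec_strategy N K m" using ms mp unfolding exec_strategy_def by simp
  define R where "R = (\<Prod>k\<in>{1..K} - {1,i}. (1 + lam * n k))"
  have R: "R > 0" unfolding R_def using np lam by (intro prod_pos) (auto intro!: add_pos_pos)
  have Pn: "(\<Prod>j=1..K. (1 + lam * n j)) = (1 + lam * n 1) * (1 + lam * n i) * R"
    unfolding R_def using split2(1)[OF finite_atLeastAtMost one i i1] by simp
  have "(\<Prod>j=1..K. (1 + lam * m j)) = (1 + lam * m 1) * (1 + lam * m i) * (\<Prod>k\<in>{1..K} - {1,i}. (1 + lam * m k))"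
    using split2(1)[OF finite_atLeastAtMost one i i1] by simp
  also have "\<dots> = (1 + lam * a) * (1 + lam * a) * R" unfolding R_def rp m1 mi by simp
  finally have Pm: "(\<Prod>j=1..K. (1 + lam * m j)) = (1 + lam * a) * (1 + lam * a) * R" .
  have d: "(1 + lam * a) * (1 + lam * a) - (1 + lam * n 1) * (1 + lam * n i) = (lam * (n 1 - n i))^2 / 4"
    using sq_id[of lam "n i" "n 1"] by (simp only: a_def)
  have "(lam * (n 1 - n i))^2 > 0" using lam ne by simp
  hence "(1 + lam * n 1) * (1 + lam * n i) < (1 + lam * a) * (1 + lam * a)" using d by linarith
  hence "(1 + lam * n 1) * (1 + lam * n i) * R < (1 + lam * a) * (1 + lam * a) * R" using R by simp
  thus ?thesis using Pn Pm stm by auto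
qed

lemma maxchar:
  assumes lam: "lam > 0" and K: "K \<ge> 1" and st: "exec_strategy N K n"
  shows "(\<forall>m. exec_strategy N K m \<longrightarrow> (\<Prod>j=1..K. (1 + lam * m j)) \<le> (\<Prod>j=1..K. (1 + lam * n j)))
     \<longleftrightarrow> (\<forall>k\<in>{1..K}. n k = N / real K)"
proof
  assume H: "\<forall>m. exec_strategy N K m \<longrightarrow> (\<Prod>j=1..K. (1 + lam * m j)) \<le> (\<Prod>j=1..K. (1 + lam * n j))"
  have eq: "\<forall>k\<in>{1..K}. n k = n 1"
  proof (rule ccontr)
    assume "\<not> (\<forall>k\<in>{1..K}. n k = n 1)"
    then obtain i where "i \<in> {1..K}" "n i \<noteq> n 1" by auto
    from smooth[OF lam K st this] obtain m where m: "exec_strategy N K m"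
      "(\<Prod>j=1..K. (1 + lam * n j)) < (\<Prod>j=1..K. (1 + lam * m j))" by blast
    have "(\<Prod>j=1..K. (1 + lam * m j)) \<le> (\<Prod>j=1..K. (1 + lam * n j))" using H m(1) by blast
    with m(2) show False by linarith
  qed
  have "N = (\<Sum>k=1..K. n k)" using st unfolding exec_strategy_def by simp
  also have "\<dots> = (\<Sum>k=1..K. n 1)" by (rule sum.cong[OF refl]) (use eq in blast)
  also have "\<dots> = K * n 1" by simp
  finally have "n 1 = N / K" using K by (simp add: field_simps)
  thus "\<forall>k\<in>{1..K}. n k = N / real K" using eq by auto
next
  assume E: "\<forall>k\<in>{1..K}. n k = N / real K"
  have "(\<Prod>j=1..K. (1 + lam * n j)) = (\<Prod>j=1..K. (1 + lam * N / K))" using E by (intro prod.cong) auto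
  also have "\<dots> = (1 + lam * N / K)^K" by simp
  finally have P: "(\<Prod>j=1..K. (1 + lam * n j)) = (1 + lam * N / K)^K" .
  show "\<forall>m. exec_strategy N K m \<longrightarrow> (\<Prod>j=1..K. (1 + lam * m j)) \<le> (\<Prod>j=1..K. (1 + lam * n j))"
    using amgm[OF lam K] P by auto
qed

lemma avg_eq:
  fixes K :: nat
  assumes "lam \<noteq> 0"
  shows "avg_price S lam N K m = S * ((\<Prod>j=1..K. (1 + lam * m j)) - 1) / (lam * N)"
proof -
  have "(\<Sum>k=1..K. m k * kth_price S lam m (k - 1)) = S * (\<Sum>k=1..K. m k * (\<Prod>j=1..k-1. (1 + lam * m j)))"
    unfolding kth_price_def by (simp add: sum_distrib_left mult_ac)
  also have "\<dots> = S * ((\<Prod>j=1..K. (1 + lam * m j)) - 1) / lam"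
  proof -
    have T: "lam * (\<Sum>k=1..K. m k * (\<Prod>j=1..k-1. (1 + lam * m j))) = (\<Prod>j=1..K. (1 + lam * m j)) - 1"
      by (rule telescope)
    hence "(\<Sum>k=1..K. m k * (\<Prod>j=1..k-1. (1 + lam * m j))) = ((\<Prod>j=1..K. (1 + lam * m j)) - 1) / lam"
      using assms by (simp add: eq_divide_eq mult.commute)
    thus ?thesis by simp
  qed
  finally have X: "(\<Sum>k=1..K. m k * kth_price S lam m (k - 1)) = S * ((\<Prod>j=1..K. (1 + lam * m j)) - 1) / lam" .
  show ?thesis unfolding avg_price_def X by simp
qed

theorem theorem5p1:
  fixes S lam N :: real and K :: nat and n :: "nat \<Rightarrow> real"
  assumes "S > 0" and "lam > 0" and "N > 0" and "K \<ge> 1"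
    and "exec_strategy N K n"
  shows "S + lam * S * N \<le> kth_price S lam n K
      \<and> kth_price S lam n K \<le> S * exp (lam * N)
      \<and> S + (1/2) * lam * S * (N - Max (n ` {1..K})) \<le> avg_price S lam N K n
      \<and> avg_price S lam N K n \<le> S * (exp (lam * N) - 1) / (lam * N)
      \<and> ((\<forall>m. exec_strategy N K m \<longrightarrow> kth_price S lam m K \<le> kth_price S lam n K)
           \<longleftrightarrow> (\<forall>k\<in>{1..K}. n k = N / real K))
      \<and> ((\<forall>m. exec_strategy N K m \<longrightarrow> kth_price S lam m K - S \<le> kth_price S lam n K - S)
           \<longleftrightarrow> (\<forall>k\<in>{1..K}. n k = N / real K))
      \<and> ((\<forall>m. exec_strategy N K m \<longrightarrow> avg_price S lam N K m \<le> avg_price S lam N K n)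
           \<longleftrightarrow> (\<forall>k\<in>{1..K}. n k = N / real K))"
proof -
  note S = assms(1) and lam = assms(2) and NN = assms(3) and K = assms(4) and st = assms(5)
  define P where "P = (\<lambda>m. \<Prod>j=1..K. (1 + lam * m j))"
  have np: "\<And>k. k \<in> {1..K} \<Longrightarrow> 0 < n k" using st unfolding exec_strategy_def by auto
  have ns: "(\<Sum>k=1..K. n k) = N" using st unfolding exec_strategy_def by auto
  have kp: "\<And>m. kth_price S lam m K = S * P m" unfolding kth_price_def P_def by simp
  have ap: "\<And>m. avg_price S lam N K m = S * (P m - 1) / (lam * N)" unfolding P_def using avg_eq lam by simp
  have lowP: "1 + lam * N \<le> P n"
  proof -
    have "1 + (\<Sum>j=1..K. lam * n j) \<le> P n" unfolding P_def
      by (rule prod_ge_sum) (use np lam in \<open>auto intro: less_imp_le\<close>)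
    thus ?thesis using ns by (simp add: sum_distrib_left[symmetric])
  qed
  have upP: "P n \<le> exp (lam * N)"
  proof -
    have nn: "\<And>j. j \<in> {1..K} \<Longrightarrow> 0 \<le> 1 + lam * n j" using np lam by (smt (verit) mult_pos_pos)
    have "P n \<le> (\<Prod>j=1..K. exp (lam * n j))" unfolding P_def
      by (rule prod_mono) (use nn in \<open>auto intro: exp_ge_add_one_self\<close>)
    also have "\<dots> = exp (\<Sum>j=1..K. lam * n j)" by (simp add: exp_sum)
    also have "\<dots> = exp (lam * N)" using ns by (simp add: sum_distrib_left[symmetric])
    finally show ?thesis .
  qed
  have p1: "S + lam * S * N \<le> kth_price S lam n K"
    unfolding kp using mult_left_mono[OF lowP, of S] S by (simp add: algebra_simps)
  have p2: "kth_price S lam n K \<le> S * exp (lam * N)"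
    unfolding kp using mult_left_mono[OF upP, of S] S by simp
  have p4: "avg_price S lam N K n \<le> S * (exp (lam * N) - 1) / (lam * N)"
    unfolding ap using S lam NN upP by (intro divide_right_mono mult_left_mono) auto
  have p3: "S + (1/2) * lam * S * (N - Max (n ` {1..K})) \<le> avg_price S lam N K n"
  proof -
    define M where "M = Max (n ` {1..K})"
    have nM: "\<And>k. k \<in> {1..K} \<Longrightarrow> n k \<le> M" unfolding M_def by (intro Max_ge) auto
    have Q: "(\<Sum>k=1..K. (n k)^2) \<le> M * N"
    proof -
      have "(\<Sum>k=1..K. (n k)^2) \<le> (\<Sum>k=1..K. M * n k)"
        by (rule sum_mono) (use nM np in \<open>auto simp: power2_eq_square intro: mult_right_mono less_imp_le\<close>)
      thus ?thesis using ns by (simp add: sum_distrib_left[symmetric])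
    qed
    have pr: "\<And>k. k \<in> {1..K} \<Longrightarrow> n k * (1 + lam * (\<Sum>j=1..k-1. n j)) \<le> n k * (\<Prod>j=1..k-1. (1 + lam * n j))"
    proof -
      fix k assume k: "k \<in> {1..K}"
      have "1 + (\<Sum>j=1..k-1. lam * n j) \<le> (\<Prod>j=1..k-1. (1 + lam * n j))"
        by (rule prod_ge_sum) (use np lam k in \<open>auto intro!: mult_nonneg_nonneg less_imp_le\<close>)
      hence "1 + lam * (\<Sum>j=1..k-1. n j) \<le> (\<Prod>j=1..k-1. (1 + lam * n j))" by (simp add: sum_distrib_left)
      thus "n k * (1 + lam * (\<Sum>j=1..k-1. n j)) \<le> n k * (\<Prod>j=1..k-1. (1 + lam * n j))"
        using np[OF k] by (intro mult_left_mono) auto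
    qed
    have B1: "(\<Sum>k=1..K. n k * (1 + lam * (\<Sum>j=1..k-1. n j))) \<le> (\<Sum>k=1..K. n k * (\<Prod>j=1..k-1. (1 + lam * n j)))"
      by (rule sum_mono) (rule pr)
    have B2: "(\<Sum>k=1..K. n k * (1 + lam * (\<Sum>j=1..k-1. n j))) = N + lam * (\<Sum>k=1..K. n k * (\<Sum>j=1..k-1. n j))"
      using ns by (simp add: algebra_simps sum.distrib sum_distrib_left)
    have A2: "2 * (\<Sum>k=1..K. n k * (\<Sum>j=1..k-1. n j)) = N^2 - (\<Sum>k=1..K. (n k)^2)"
      using pairsum[where K=K and n=n] ns by simp
    have A1: "N + lam * (\<Sum>k=1..K. n k * (\<Sum>j=1..k-1. n j)) \<le> (\<Sum>k=1..K. n k * (\<Prod>j=1..k-1. (1 + lam * n j)))"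
      using B1 B2 by simp
    have A0: "N^2 - M * N \<le> 2 * (\<Sum>k=1..K. n k * (\<Sum>j=1..k-1. n j))" using A2 Q by linarith
    have A3: "(N^2 - M * N) / 2 \<le> (\<Sum>k=1..K. n k * (\<Sum>j=1..k-1. n j))" using A0 by simp
    have "lam * ((N^2 - M * N) / 2) \<le> lam * (\<Sum>k=1..K. n k * (\<Sum>j=1..k-1. n j))"
      using A3 lam by (intro mult_left_mono) auto
    hence "N + lam * (N^2 - M * N) / 2 \<le> (\<Sum>k=1..K. n k * (\<Prod>j=1..k-1. (1 + lam * n j)))"
      using A1 by simp
    hence "S * (N + lam * (N^2 - M * N) / 2) \<le> S * (\<Sum>k=1..K. n k * (\<Prod>j=1..k-1. (1 + lam * n j)))"
      using S by (intro mult_left_mono) auto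
    hence "S * (N + lam * (N^2 - M * N) / 2) / N \<le> S * (\<Sum>k=1..K. n k * (\<Prod>j=1..k-1. (1 + lam * n j))) / N"
      using NN by (intro divide_right_mono) auto
    moreover have "S * (N + lam * (N^2 - M * N) / 2) / N = S + (1/2) * lam * S * (N - M)"
      using NN by (simp add: field_simps power2_eq_square)
    moreover have "avg_price S lam N K n = S * (\<Sum>k=1..K. n k * (\<Prod>j=1..k-1. (1 + lam * n j))) / N"
      unfolding avg_price_def kth_price_def by (simp add: sum_distrib_left sum_divide_distrib mult_ac)
    ultimately show ?thesis unfolding M_def by simp
  qed
  have mc: "(\<forall>m. exec_strategy N K m \<longrightarrow> P m \<le> P n) \<longleftrightarrow> (\<forall>k\<in>{1..K}. n k = N / real K)"
    unfolding P_def by (rule maxchar[OF lam K st])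
  have e1: "\<And>m. (kth_price S lam m K \<le> kth_price S lam n K) \<longleftrightarrow> P m \<le> P n" unfolding kp using S by simp
  have e2: "\<And>m. (kth_price S lam m K - S \<le> kth_price S lam n K - S) \<longleftrightarrow> P m \<le> P n" unfolding kp using S by simp
  have e3: "\<And>m. (avg_price S lam N K m \<le> avg_price S lam N K n) \<longleftrightarrow> P m \<le> P n"
  proof -
    fix m
    have c: "0 < S / (lam * N)" using S lam NN by simp
    have "(avg_price S lam N K m \<le> avg_price S lam N K n) \<longleftrightarrow> S / (lam * N) * (P m - 1) \<le> S / (lam * N) * (P n - 1)"
      unfolding ap by (simp add: mult_ac)
    also have "\<dots> \<longleftrightarrow> P m \<le> P n" using mult_le_cancel_left_pos[OF c, of "P m - 1" "P n - 1"] by linarith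
    finally show "(avg_price S lam N K m \<le> avg_price S lam N K n) \<longleftrightarrow> P m \<le> P n" .
  qed
  show ?thesis using p1 p2 p3 p4 mc e1 e2 e3 by simp
qed

end
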